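(* Let $\Omega$ be a Keplerian branch around ${\rm O}$ in the plane ${\rm O}xy$ with equation $r=\alpha x+\beta y+\gamma$, $\gamma>0$, which possesses a horizontal chord (two distinct points of $\Omega$ with the same ordinate). Then there is a unique triple $(\phi,M,N)\in\,]0,\pi[\times\mathbb{R}\times\,]0,+\infty[$ such that $\Omega$ is the image of the vertical branch $\Sigma$ with equation $r=My+N$ by the affine map $(x_1,y_1)\mapsto(x_3,y_3)$ defined by $x_1=x_3-M\frac{\cos\phi}{\sin\phi}y_3-N\cos\phi$, $y_1=\frac{1}{\sin\phi}y_3$.
   Context: In the Euclidean plane ${\rm O}xy$, $r=\sqrt{x^2+y^2}$. A Keplerian branch around ${\rm O}$ is the image of a solution of Newton's system $\ddot q=-q/\|q\|^3$ (extended through collisions by bouncing back along the same ray with the same energy). For $\gamma>0$, the set of points satisfying $r=\alpha x+\beta y+\gamma$ is an (irreducible) Keplerian branch around ${\rm O}$. *)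

theory Defs
  imports Complex_Main
begin

definition kepler_branch :: "real \<Rightarrow> real \<Rightarrow> real \<Rightarrow> (real \<times> real) set" where
  "kepler_branch \<alpha> \<beta> \<gamma> = {(x, y). sqrt (x\<^sup>2 + y\<^sup>2) = \<alpha> * x + \<beta> * y + \<gamma>}"

definition vertical_branch :: "real \<Rightarrow> real \<Rightarrow> (real \<times> real) set" where
  "vertical_branch M N = kepler_branch 0 M N"

definition affine_image :: "real \<Rightarrow> real \<Rightarrow> real \<Rightarrow> (real \<times> real) set \<Rightarrow> (real \<times> real) set" where
  "affine_image \<phi> M N S = {(x3, y3). \<exists>x1 y1. (x1, y1) \<in> S \<and>
      x1 = x3 - M * (cos \<phi> / sin \<phi>) * y3 - N * cos \<phi> \<and> y1 = y3 / sin \<phi>}"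

end

theory Submission
  imports Defs
begin

lemma img_char:
  fixes \<phi> M N :: real
  assumes phi: "\<phi> \<in> {0<..<pi}" and N: "N > 0"
  shows "affine_image \<phi> M N (vertical_branch M N)
         = kepler_branch (cos \<phi>) (sin \<phi> * M) (N * (sin \<phi>)\<^sup>2)"
proof -
  define s where "s = sin \<phi>"
  define c where "c = cos \<phi>"
  have s: "s > 0" using phi unfolding s_def by (auto intro: sin_gt_zero)
  have cs: "c^2 + s^2 = 1" unfolding s_def c_def by (simp add: add.commute)
  have cl: "\<bar>c\<bar> < 1"
  proof -
    have "c^2 < 1" using cs s by (smt (verit) zero_less_power)
    thus ?thesis by (simp add: abs_square_less_1)
  qed
  have key: "(sqrt ((x - M * (c / s) * y - N * c)\<^sup>2 + (y / s)\<^sup>2) = M * (y / s) + N)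
       \<longleftrightarrow> (sqrt (x\<^sup>2 + y\<^sup>2) = c * x + s * M * y + N * s\<^sup>2)" for x y
  proof -
    define u where "u = M * (y / s) + N"
    define x1 where "x1 = x - c * u"
    define r where "r = sqrt (x\<^sup>2 + y\<^sup>2)"
    have x1e: "x - M * (c / s) * y - N * c = x1"
      unfolding x1_def u_def using s by (simp add: field_simps)
    have w: "c * x + s * M * y + N * s\<^sup>2 = c * x + s^2 * u"
      unfolding u_def using s by (simp add: field_simps power2_eq_square)
    have alg: "s^2 * (x1^2 + (y/s)^2 - u^2) = x^2 + y^2 - (c * x + s^2 * u)^2"
    proof -
      have "s^2 * (x1^2 + (y/s)^2 - u^2) = s^2 * x1^2 + y^2 - s^2*u^2"
        using s by (simp add: field_simps power2_eq_square)
      also have "\<dots> = x^2 + y^2 - (c * x + s^2 * u)^2"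
        unfolding x1_def using cs by algebra
      finally show ?thesis .
    qed
    have r0: "r \<ge> 0" "r^2 = x^2 + y^2" unfolding r_def by auto
    have rx: "\<bar>x\<bar> \<le> r" unfolding r_def by (simp add: real_sqrt_ge_abs1)
    have cx: "\<bar>c * x\<bar> \<le> \<bar>x\<bar>" using cl by (simp add: abs_mult mult_left_le_one_le)
    show ?thesis unfolding x1e w r_def[symmetric] u_def[symmetric]
    proof
      assume h: "sqrt (x1\<^sup>2 + (y / s)\<^sup>2) = u"
      hence u0: "u \<ge> 0" by (metis real_sqrt_ge_zero zero_le_power2 add_nonneg_nonneg)
      have "x1\<^sup>2 + (y / s)\<^sup>2 = u^2" using h by (metis real_sqrt_pow2 zero_le_power2 add_nonneg_nonneg)
      hence sq: "r^2 = (c * x + s^2 * u)^2" using alg r0 by simp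
      have "c * x + s^2 * u \<ge> 0"
      proof (rule ccontr)
        assume "\<not> ?thesis"
        hence neg: "c * x + s^2 * u < 0" by simp
        hence "r = -(c * x + s^2 * u)" using sq r0(1)
          by (smt (verit) power2_eq_iff)
        hence "s^2 * u \<le> 0" using rx cx by linarith
        hence "u = 0" using u0 s by (smt (verit) mult_pos_pos zero_less_power)
        hence "x1^2 + (y/s)^2 = 0" using h by simp
        hence "y = 0" using s by (smt (verit) divide_eq_0_iff zero_le_power2 power_eq_0_iff)
        thus False using \<open>u = 0\<close> N unfolding u_def by simp
      qed
      thus "r = c * x + s^2 * u" using sq r0(1) by (smt (verit) power2_eq_iff)
    next
      assume h: "r = c * x + s^2 * u"
      hence "s^2 * u \<ge> 0" using rx cx by linarith
      hence u0: "u \<ge> 0" using s by (simp add: zero_le_mult_iff)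
      have "x1\<^sup>2 + (y / s)\<^sup>2 = u^2" using alg h r0 s by simp
      thus "sqrt (x1\<^sup>2 + (y / s)\<^sup>2) = u" using u0 by simp
    qed
  qed
  show ?thesis
    unfolding affine_image_def vertical_branch_def kepler_branch_def
    using key unfolding s_def c_def by auto
qed


lemma kb_unique:
  fixes a b g a' b' g' :: real
  assumes eq: "kepler_branch a b g = kepler_branch a' b' g'" and a: "\<bar>a\<bar> < 1" and g: "g > 0"
  shows "a = a' \<and> b = b' \<and> g = g'"
proof -
  have lin: "(a - a') * x + (b - b') * y + (g - g') = 0" if "(x, y) \<in> kepler_branch a b g" for x y
  proof -
    have "(x, y) \<in> kepler_branch a' b' g'" using that eq by simp
    thus ?thesis using that unfolding kepler_branch_def by (simp add: algebra_simps)
  qed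
  define p1 where "p1 = g / (1 - a)"
  define p2 where "p2 = - g / (1 + a)"
  have p1: "p1 > 0" unfolding p1_def using a g by simp
  have p2: "p2 < 0" unfolding p2_def using a g by (simp add: divide_neg_pos)
  have "a * p1 + g = p1" unfolding p1_def using a by (simp add: field_simps)
  hence "(p1, 0) \<in> kepler_branch a b g" unfolding kepler_branch_def using p1 by simp
  hence e1: "(a - a') * p1 + (g - g') = 0" using lin by fastforce
  have "a * p2 + g = - p2" unfolding p2_def using a by (simp add: field_simps)
  hence "(p2, 0) \<in> kepler_branch a b g" unfolding kepler_branch_def using p2 by simp
  hence e2: "(a - a') * p2 + (g - g') = 0" using lin by fastforce
  have "(a - a') * (p1 - p2) = 0" using e1 e2 by (simp add: algebra_simps)
  hence aa: "a = a'" using p1 p2 by simp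
  hence gg: "g = g'" using e1 by simp
  obtain q where q: "q \<noteq> 0" "(0, q) \<in> kepler_branch a b g"
  proof (cases "b < 1")
    case True
    have "b * (g / (1 - b)) + g = g / (1 - b)" using True by (simp add: field_simps)
    moreover have "g / (1 - b) > 0" using True g by simp
    ultimately have "(0, g / (1 - b)) \<in> kepler_branch a b g" unfolding kepler_branch_def using True g by simp
    moreover have "g / (1 - b) \<noteq> 0" using True g by simp
    ultimately show ?thesis using that by blast
  next
    case False
    have "b * (- g / (1 + b)) + g = g / (1 + b)" using False by (simp add: field_simps)
    moreover have "g / (1 + b) > 0" using False g by simp
    ultimately have "(0, - g / (1 + b)) \<in> kepler_branch a b g" unfolding kepler_branch_def using False g by simp
    moreover have "- g / (1 + b) \<noteq> 0" using False g by simp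
    ultimately show ?thesis using that by blast
  qed
  have "(b - b') * q = 0" using lin[OF q(2)] aa gg by simp
  thus ?thesis using q(1) aa gg by simp
qed

lemma chord_alpha:
  fixes \<alpha> \<beta> \<gamma> :: real
  assumes g: "\<gamma> > 0"
    and "\<exists>p\<in>kepler_branch \<alpha> \<beta> \<gamma>. \<exists>q\<in>kepler_branch \<alpha> \<beta> \<gamma>. p \<noteq> q \<and> snd p = snd q"
  shows "\<bar>\<alpha>\<bar> < 1"
proof -
  obtain x1 x2 y where d: "x1 \<noteq> x2" and h1: "sqrt (x1\<^sup>2 + y\<^sup>2) = \<alpha> * x1 + \<beta> * y + \<gamma>"
    and h2: "sqrt (x2\<^sup>2 + y\<^sup>2) = \<alpha> * x2 + \<beta> * y + \<gamma>"
    using assms(2) unfolding kepler_branch_def by auto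
  have "\<bar>cmod (Complex x2 y) - cmod (Complex x1 y)\<bar> \<le> cmod (Complex x2 y - Complex x1 y)"
    by (rule norm_triangle_ineq3)
  also have "Complex x2 y - Complex x1 y = Complex (x2 - x1) 0" by (simp add: complex_eq_iff)
  finally have "\<bar>\<alpha> * (x2 - x1)\<bar> \<le> \<bar>x2 - x1\<bar>" using h1 h2 by (simp add: complex_norm algebra_simps)
  hence le: "\<bar>\<alpha>\<bar> \<le> 1" using d by (simp add: abs_mult)
  have "\<bar>\<alpha>\<bar> \<noteq> 1"
  proof
    assume a1: "\<bar>\<alpha>\<bar> = 1"
    define k where "k = \<beta> * y + \<gamma>"
    have q1: "x1^2 + y^2 = (\<alpha> * x1 + k)^2" using h1 unfolding k_def
      by (metis add.assoc real_sqrt_pow2 zero_le_power2 add_nonneg_nonneg)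
    have q2: "x2^2 + y^2 = (\<alpha> * x2 + k)^2" using h2 unfolding k_def
      by (metis add.assoc real_sqrt_pow2 zero_le_power2 add_nonneg_nonneg)
    have aa: "\<alpha>^2 = 1" using a1 by (metis abs_of_nonneg abs_of_nonpos power2_abs power_one)
    have l1: "y^2 - k^2 = 2 * \<alpha> * k * x1" using q1 aa by algebra
    have l2: "y^2 - k^2 = 2 * \<alpha> * k * x2" using q2 aa by algebra
    have "\<alpha> * k = 0" using l1 l2 d by auto
    hence k0: "k = 0" using a1 by auto
    hence "y = 0" using l1 by simp
    thus False using k0 g unfolding k_def by simp
  qed
  thus ?thesis using le by simp
qed

theorem lemma7:
  fixes \<alpha> \<beta> \<gamma> :: real
  assumes "\<gamma> > 0"
    and "\<exists>p\<in>kepler_branch \<alpha> \<beta> \<gamma>. \<exists>q\<in>kepler_branch \<alpha> \<beta> \<gamma>. p \<noteq> q \<and> snd p = snd q"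
  shows "\<exists>!t :: real \<times> real \<times> real. case t of (\<phi>, M, N) \<Rightarrow>
           \<phi> \<in> {0<..<pi} \<and> N > 0 \<and>
           kepler_branch \<alpha> \<beta> \<gamma> = affine_image \<phi> M N (vertical_branch M N)"
proof -
  have a: "\<bar>\<alpha>\<bar> < 1" using chord_alpha assms by blast
  define \<phi> where "\<phi> = arccos \<alpha>"
  have c: "cos \<phi> = \<alpha>" unfolding \<phi>_def using a by simp
  have ph: "\<phi> \<in> {0<..<pi}" unfolding \<phi>_def using a
    using arccos_lt_bounded[of \<alpha>] by auto
  have s: "sin \<phi> > 0" using ph by (auto intro: sin_gt_zero)
  define M where "M = \<beta> / sin \<phi>"
  define N where "N = \<gamma> / (sin \<phi>)^2"
  have N: "N > 0" unfolding N_def using s assms(1) by simp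
  have ex: "kepler_branch \<alpha> \<beta> \<gamma> = affine_image \<phi> M N (vertical_branch M N)"
    using img_char[OF ph N] c s unfolding M_def N_def by simp
  show ?thesis
  proof (rule ex1I[where a = "(\<phi>, M, N)"])
    show "case (\<phi>, M, N) of (\<phi>, M, N) \<Rightarrow> \<phi> \<in> {0<..<pi} \<and> N > 0 \<and>
           kepler_branch \<alpha> \<beta> \<gamma> = affine_image \<phi> M N (vertical_branch M N)"
      using ph N ex by simp
  next
    fix t :: "real \<times> real \<times> real"
    assume h: "case t of (\<phi>, M, N) \<Rightarrow> \<phi> \<in> {0<..<pi} \<and> N > 0 \<and>
           kepler_branch \<alpha> \<beta> \<gamma> = affine_image \<phi> M N (vertical_branch M N)"
    obtain \<phi>' M' N' where t: "t = (\<phi>', M', N')" by (cases t) auto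
    have ph': "\<phi>' \<in> {0<..<pi}" and N': "N' > 0"
      and e: "kepler_branch \<alpha> \<beta> \<gamma> = affine_image \<phi>' M' N' (vertical_branch M' N')"
      using h t by auto
    have "kepler_branch \<alpha> \<beta> \<gamma> = kepler_branch (cos \<phi>') (sin \<phi>' * M') (N' * (sin \<phi>')\<^sup>2)"
      using e img_char[OF ph' N'] by simp
    from kb_unique[OF this a assms(1)]
    have u1: "\<alpha> = cos \<phi>'" and u2: "\<beta> = sin \<phi>' * M'" and u3: "\<gamma> = N' * (sin \<phi>')\<^sup>2"
      by auto
    have "\<phi>' = \<phi>" unfolding \<phi>_def u1 using ph' by (simp add: arccos_cos)
    moreover have "sin \<phi>' > 0" using ph' by (auto intro: sin_gt_zero)
    ultimately have "M' = M" "N' = N" unfolding M_def N_def u2 u3 by auto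
    thus "t = (\<phi>, M, N)" using t \<open>\<phi>' = \<phi>\<close> by simp
  qed
qed

end
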